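(* Let $p\in(0,1/2)$, $\beta<0$ and $\alpha=\frac{2}{2-p}$. Let $\zeta$ be the global positive increasing solution on $(0,\infty)$ of $$\zeta'=\frac{\alpha^2\zeta+\varphi^p\zeta^{-1}}{\alpha(\alpha-1)\varphi-\beta\zeta}$$ satisfying $\zeta(0^+)=0$ and $|\zeta(\varphi)-\gamma_\beta\varphi^{(p+1)/3}|\le\varphi^q$ for small $\varphi$. Here $\gamma_\beta=[3/(|\beta|(p+1))]^{1/3}$ and $q\in(\frac{p+1}{3},1)$. Then for every $\varepsilon>0$ there exists $\varphi_\varepsilon>0$ such that $$\Big(\frac{\alpha}{|\beta|}-\varepsilon\Big)\varphi\le\zeta(\varphi)\le\Big(\frac{\alpha}{|\beta|}+\varepsilon\Big)\varphi\quad\text{for all }\varphi\ge\varphi_\varepsilon.$$ *)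

theory Defs
  imports "HOL-Analysis.Analysis"
begin

end

theory Submission
  imports Defs
begin


lemma trap_up:
  fixes f f' :: "real \<Rightarrow> real"
  assumes der: "\<forall>x\<ge>a. (f has_real_derivative f' x) (at x)"
    and neg: "\<forall>x\<ge>a. f x \<ge> c \<longrightarrow> f' x < 0"
    and st: "a \<le> st" "f st < c" and x: "st \<le> x"
  shows "f x < c"
proof (rule ccontr)
  assume "\<not> f x < c"
  hence fx: "f x \<ge> c" by simp
  have "continuous_on {st..x} f"
    using der st by (intro continuous_at_imp_continuous_on ballI) (meson DERIV_isCont atLeastAtMost_iff order_trans)
  then obtain t where t: "t \<in> {st..x}" "\<forall>s\<in>{st..x}. f s \<le> f t"
    using continuous_attains_sup[of "{st..x}" f] x by auto
  have "f x \<le> f t" using t x by auto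
  hence ft: "f t \<ge> c" using fx by linarith
  have tne: "t > st" using t ft st by (cases "t = st") auto
  have "f' t < 0" using neg t ft st by auto
  moreover have "(f has_real_derivative f' t) (at t)" using der t st by auto
  ultimately obtain d where d: "d > 0" "\<forall>h>0. h < d \<longrightarrow> f t < f (t - h)"
    using DERIV_neg_dec_left by blast
  define h where "h = min (d/2) (t - st)"
  have "h > 0" "h < d" using d tne by (auto simp: h_def)
  hence "f t < f (t - h)" using d by auto
  moreover have "t - h \<in> {st..x}" using t tne `h>0` by (auto simp: h_def)
  ultimately show False using t by fastforce
qed

lemma trap_down:
  fixes f f' :: "real \<Rightarrow> real"
  assumes der: "\<forall>x\<ge>a. (f has_real_derivative f' x) (at x)"
    and pos: "\<forall>x\<ge>a. f x \<le> c \<longrightarrow> f' x > 0"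
    and st: "a \<le> st" "f st > c" and x: "st \<le> x"
  shows "f x > c"
proof -
  have "- f x < - c"
    apply (rule trap_up[where f="\<lambda>x. - f x" and f'="\<lambda>x. - f' x" and a=a and st=st])
    using der pos st x by (auto intro: DERIV_minus)
  thus ?thesis by simp
qed

lemma escape_up:
  fixes f f' :: "real \<Rightarrow> real"
  assumes der: "\<forall>x\<ge>a. (f has_real_derivative f' x) (at x)"
    and neg: "\<forall>x\<ge>a. f x \<ge> c \<longrightarrow> f' x \<le> - k / x"
    and k: "k > 0" and a: "a > 0"
  shows "\<exists>st\<ge>a. f st < c"
proof (rule ccontr)
  assume "\<not> ?thesis"
  hence all: "\<forall>x\<ge>a. f x \<ge> c" by force
  define u where "u x = f x + k * ln x" for x
  have u: "u x \<le> u a" if "x \<ge> a" for x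
  proof (rule DERIV_nonpos_imp_nonincreasing[OF that])
    fix y assume y: "a \<le> y" "y \<le> x"
    have "(u has_real_derivative f' y + k * (1 / y)) (at y)"
      unfolding u_def using der y a
      by (intro derivative_eq_intros) auto
    moreover have "f' y + k * (1/y) \<le> 0" using neg all y by auto
    ultimately show "\<exists>z. (u has_real_derivative z) (at y) \<and> z \<le> 0" by blast
  qed
  define x where "x = max a (exp ((u a - c + 1) / k))"
  have xa: "x \<ge> a" by (simp add: x_def)
  have "ln x \<ge> (u a - c + 1) / k"
  proof -
    have "exp ((u a - c + 1) / k) \<le> x" by (simp add: x_def)
    hence "ln (exp ((u a - c + 1) / k)) \<le> ln x" using a xa by (subst ln_le_cancel_iff) auto
    thus ?thesis by simp
  qed
  hence "k * ln x \<ge> u a - c + 1" using k by (simp add: field_simps)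
  moreover have "f x + k * ln x \<le> u a" using u[OF xa] by (simp add: u_def)
  ultimately have "f x < c" by linarith
  thus False using all xa by force
qed

lemma escape_down:
  fixes f f' :: "real \<Rightarrow> real"
  assumes der: "\<forall>x\<ge>a. (f has_real_derivative f' x) (at x)"
    and fpos: "\<forall>x\<ge>a. f x > 0"
    and pos: "\<forall>x\<ge>a. f x \<le> c \<longrightarrow> f' x \<ge> k * f x / x"
    and k: "k > 0" and a: "a > 0" and c: "c > 0"
  shows "\<exists>st\<ge>a. f st > c"
proof (rule ccontr)
  assume "\<not> ?thesis"
  hence all: "\<forall>x\<ge>a. f x \<le> c" by force
  define u where "u x = ln (f x) - k * ln x" for x
  have u: "u x \<ge> u a" if "x \<ge> a" for x
  proof (rule DERIV_nonneg_imp_nondecreasing[OF that])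
    fix y assume y: "a \<le> y" "y \<le> x"
    have "(u has_real_derivative f' y / f y - k * (1 / y)) (at y)"
      unfolding u_def using der y a fpos
      by (intro derivative_eq_intros) auto
    moreover have "f' y / f y - k * (1/y) \<ge> 0"
    proof -
      have "f' y \<ge> k * f y / y" using pos all y by auto
      hence "f' y / f y \<ge> (k * f y / y) / f y" using fpos y by (intro divide_right_mono) auto
      thus ?thesis using fpos y a by auto
    qed
    ultimately show "\<exists>z. (u has_real_derivative z) (at y) \<and> z \<ge> 0" by blast
  qed
  define x where "x = max a (exp ((ln c - u a + 1) / k))"
  have xa: "x \<ge> a" by (simp add: x_def)
  have "ln x \<ge> (ln c - u a + 1) / k"
  proof -
    have "exp ((ln c - u a + 1) / k) \<le> x" by (simp add: x_def)
    hence "ln (exp ((ln c - u a + 1) / k)) \<le> ln x" using a xa by (subst ln_le_cancel_iff) auto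
    thus ?thesis by simp
  qed
  hence "k * ln x \<ge> ln c - u a + 1" using k by (simp add: field_simps)
  moreover have "ln (f x) - k * ln x \<ge> u a" using u[OF xa] by (simp add: u_def)
  ultimately have "ln (f x) > ln c" by linarith
  hence "f x > c" using c fpos xa by auto
  thus False using all xa by force
qed



lemma core_up:
  fixes a b e x z P :: real
  assumes b: "b > 0" and a: "a > 1" and e: "e > 0" and x1: "x \<ge> 1"
    and x2: "x \<ge> 2*b/(a^2*e)" and z: "z \<ge> (a/b+e)*x" and P: "0 \<le> P" "P \<le> x"
  shows "(a^2*z + P/z)/(a*(a-1)*x + b*z) \<le> z/x - e/(2*a)"
proof -
  define k where "k = e/(2*a)"
  have x0: "x > 0" using x1 by simp
  have bz: "b*z \<ge> a*x + b*e*x" using z b by (simp add: field_simps)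
  have z0: "z > 0" using bz a x0 b e by (smt (verit) mult_pos_pos zero_less_mult_pos)
  have D: "a*(a-1)*x + b*z > 0" using a x0 b z0 by (simp add: add_pos_pos)
  have h2: "z*(b*z - a*x) \<ge> b*e*x*z" using bz z0 by (smt (verit) mult_le_cancel_left_pos mult.commute)
  have xle: "x \<le> b*z/a" using bz a b e x0 by (simp add: field_simps) (smt (verit) mult_pos_pos)
  have h3: "k*a*(a-1)*x*x + k*b*z*x \<le> b*e*z*x/2"
  proof -
    have "k*a*(a-1)*x*x = e*(a-1)*x*x/2" using a by (simp add: k_def field_simps)
    also have "\<dots> \<le> e*(a-1)*x*(b*z/a)/2" using xle a e x0
      by (intro divide_right_mono mult_left_mono) auto
    finally have "k*a*(a-1)*x*x \<le> e*(a-1)*x*(b*z/a)/2" .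
    moreover have "k*b*z*x = e*b*z*x/(2*a)" by (simp add: k_def)
    ultimately have "k*a*(a-1)*x*x + k*b*z*x \<le> e*(a-1)*x*(b*z/a)/2 + e*b*z*x/(2*a)" by linarith
    also have "\<dots> = b*e*z*x/2" using a by (simp add: field_simps)
    finally show ?thesis .
  qed
  have h4: "P \<le> b*e*z*z/2"
  proof -
    have za: "z \<ge> a*x/b" using bz b e x0 by (simp add: field_simps) (smt (verit) mult_pos_pos)
    have "a*x/b > 0" using a b x0 by simp
    hence "z*z \<ge> (a*x/b)*(a*x/b)" using za by (intro mult_mono) auto
    hence "(b*e)*(z*z) \<ge> (b*e)*((a*x/b)*(a*x/b))" using b e
      by (intro mult_left_mono) auto
    hence "b*e*z*z/2 \<ge> b*e*((a*x/b)*(a*x/b))/2" by (simp add: mult.assoc)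
    also have "b*e*((a*x/b)*(a*x/b))/2 = x * (x * (a^2*e/(2*b)))" using b by (simp add: field_simps power2_eq_square)
    finally have 1: "b*e*z*z/2 \<ge> x * (x * (a^2*e/(2*b)))" .
    have "x * (a^2*e/(2*b)) \<ge> 1" using x2 a b e by (simp add: field_simps)
    hence "x * (x * (a^2*e/(2*b))) \<ge> x * 1" using x0 by (intro mult_left_mono) auto
    thus ?thesis using 1 P by linarith
  qed
  have main: "a^2*z*z*x + P*x \<le> (z - k*x)*(a*(a-1)*x + b*z)*z"
  proof -
    have "(z - k*x)*(a*(a-1)*x + b*z)*z - a^2*z*z*x = z*(z*(b*z - a*x) - (k*a*(a-1)*x*x + k*b*z*x))"
      by (simp add: algebra_simps power2_eq_square)
    also have "\<dots> \<ge> z*(b*e*x*z - b*e*z*x/2)"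
    proof -
      have "b*e*x*z - b*e*z*x/2 \<le> z*(b*z - a*x) - (k*a*(a-1)*x*x + k*b*z*x)" using h2 h3 by linarith
      thus ?thesis using z0 by (intro mult_left_mono) auto
    qed
    finally have "(z - k*x)*(a*(a-1)*x + b*z)*z - a^2*z*z*x \<ge> z*(b*e*x*z - b*e*z*x/2)" .
    moreover have "z*(b*e*x*z - b*e*z*x/2) = x*(b*e*z*z/2)" by (simp add: algebra_simps)
    moreover have "x*(b*e*z*z/2) \<ge> x*P" using h4 x0 by (intro mult_left_mono) auto
    ultimately show ?thesis by (simp add: algebra_simps)
  qed
  have "a^2*z + P/z \<le> (z/x - k)*(a*(a-1)*x + b*z)"
  proof -
    have "(a^2*z + P/z)*(z*x) = a^2*z*z*x + P*x" using z0 by (simp add: field_simps)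
    also have "\<dots> \<le> (z - k*x)*(a*(a-1)*x + b*z)*z" by (rule main)
    also have "\<dots> = ((z/x - k)*(a*(a-1)*x + b*z))*(z*x)" using x0 by (simp add: field_simps)
    finally show ?thesis using z0 x0 by (simp add: mult_le_cancel_right)
  qed
  thus ?thesis using D by (simp add: pos_divide_le_eq k_def)
qed

lemma core_down:
  fixes a b e x z P :: real
  assumes b: "b > 0" and a: "a > 1" and e: "e > 0" and x0: "x > 0" and z0: "z > 0"
    and z: "z \<le> (a/b-e)*x" and P: "0 \<le> P"
  shows "(a^2*z + P/z)/(a*(a-1)*x + b*z) \<ge> (1 + b*e/a^2) * (z/x)"
proof -
  have D: "a*(a-1)*x + b*z > 0" using a x0 b z0 by (simp add: add_pos_pos)
  have bz: "b*z \<le> a*x - b*e*x" using z b by (simp add: field_simps)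
  have "(1 + b*e/a^2) * (z/x) * (a*(a-1)*x + b*z) = (1 + b*e/a^2) * z * (a*(a-1) + b*z/x)"
    using x0 by (simp add: field_simps)
  also have "\<dots> \<le> (1 + b*e/a^2) * z * (a*(a-1) + (a - b*e))"
  proof -
    have "b*z/x \<le> a - b*e" using bz x0 by (simp add: field_simps)
    thus ?thesis using b e a z0 by (intro mult_left_mono) (auto intro: add_nonneg_nonneg)
  qed
  also have "\<dots> = z * ((1 + b*e/a^2) * (a^2 - b*e))" by (simp add: algebra_simps power2_eq_square)
  also have "\<dots> \<le> z * a^2"
  proof -
    have "(1 + b*e/a^2) * (a^2 - b*e) = a^2 - (b*e)^2/a^2" using a by (simp add: field_simps power2_eq_square)
    also have "\<dots> \<le> a^2" by simp
    finally show ?thesis using z0 by (intro mult_left_mono) auto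
  qed
  also have "\<dots> \<le> a^2*z + P/z" using P z0 by (simp add: algebra_simps)
  finally show ?thesis using D by (simp add: pos_le_divide_eq)
qed


theorem proposition7p3:
  fixes p \<beta> \<alpha> \<gamma> q :: real and \<zeta> :: "real \<Rightarrow> real"
  assumes hp: "0 < p" "p < 1/2"
    and h\<beta>: "\<beta> < 0"
    and h\<alpha>: "\<alpha> = 2 / (2 - p)"
    and h\<gamma>: "\<gamma> = root 3 (3 / (\<bar>\<beta>\<bar> * (p + 1)))"
    and hq: "(p + 1) / 3 < q" "q < 1"
    and hpos: "\<forall>\<phi>>0. \<zeta> \<phi> > 0"
    and hinc: "strict_mono_on {0<..} \<zeta>"
    and hode: "\<forall>\<phi>>0. (\<zeta> has_real_derivative
                 ((\<alpha>^2 * \<zeta> \<phi> + \<phi> powr p / \<zeta> \<phi>) / (\<alpha> * (\<alpha> - 1) * \<phi> - \<beta> * \<zeta> \<phi>))) (at \<phi>)"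
    and hlim0: "(\<zeta> \<longlongrightarrow> 0) (at_right 0)"
    and hasym: "\<forall>\<^sub>F \<phi> in at_right 0. \<bar>\<zeta> \<phi> - \<gamma> * \<phi> powr ((p + 1) / 3)\<bar> \<le> \<phi> powr q"
  shows "\<forall>\<epsilon>>0. \<exists>\<phi>\<epsilon>>0. \<forall>\<phi>\<ge>\<phi>\<epsilon>.
           (\<alpha> / \<bar>\<beta>\<bar> - \<epsilon>) * \<phi> \<le> \<zeta> \<phi> \<and> \<zeta> \<phi> \<le> (\<alpha> / \<bar>\<beta>\<bar> + \<epsilon>) * \<phi>"
proof (intro allI impI)
  fix \<epsilon> :: real assume \<epsilon>: "\<epsilon> > 0"
  define b where "b = \<bar>\<beta>\<bar>"
  have b: "b > 0" using h\<beta> by (simp add: b_def)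
  have a1: "\<alpha> > 1"
  proof -
    have "2 - p > 0" "2 - p < 2" using hp by auto
    thus ?thesis unfolding h\<alpha> by (simp add: less_divide_eq)
  qed
  define Z where "Z x = (\<alpha>^2 * \<zeta> x + x powr p / \<zeta> x) / (\<alpha> * (\<alpha> - 1) * x + b * \<zeta> x)" for x
  have hodeZ: "(\<zeta> has_real_derivative Z x) (at x)" if "x > 0" for x
  proof -
    have E: "\<alpha> * (\<alpha> - 1) * x - \<beta> * \<zeta> x = \<alpha> * (\<alpha> - 1) * x + b * \<zeta> x" using h\<beta> by (simp add: b_def)
    have D: "(\<zeta> has_real_derivative ((\<alpha>^2 * \<zeta> x + x powr p / \<zeta> x) / (\<alpha> * (\<alpha> - 1) * x - \<beta> * \<zeta> x))) (at x)"
      using hode that by blast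
    show ?thesis unfolding Z_def E[symmetric] by (rule D)
  qed
  define w where "w x = \<zeta> x / x" for x
  define w' where "w' x = (Z x * x - \<zeta> x * 1) / (x * x)" for x
  have dw: "(w has_real_derivative w' x) (at x)" if "x > 0" for x
    unfolding w_def w'_def using that
    by (intro DERIV_divide hodeZ DERIV_ident) auto
  have w'eq: "w' x = (Z x - w x) / x" if "x > 0" for x
    using that by (simp add: w'_def w_def field_simps)
  have wpos: "w x > 0" if "x > 0" for x using hpos that by (simp add: w_def)
  define c where "c = \<alpha>/b + \<epsilon>"
  define a0 where "a0 = max 1 (2*b/(\<alpha>^2*\<epsilon>))"
  define k where "k = \<epsilon>/(2*\<alpha>)"
  have k: "k > 0" using \<epsilon> a1 by (simp add: k_def)
  have a0: "a0 \<ge> 1" by (simp add: a0_def)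
  have upneg: "w' x \<le> - k / x" if x: "x \<ge> a0" "w x \<ge> c" for x
  proof -
    have x1: "x \<ge> 1" "x \<ge> 2*b/(\<alpha>^2*\<epsilon>)" using x by (auto simp: a0_def)
    have x0: "x > 0" using x1 by simp
    have z: "\<zeta> x \<ge> (\<alpha>/b+\<epsilon>)*x" using x x0 by (simp add: w_def c_def pos_le_divide_eq)
    have P: "x powr p \<le> x"
    proof -
      have "x powr p \<le> x powr 1" using hp x1 by (intro powr_mono) auto
      thus ?thesis using x0 by simp
    qed
    have "Z x \<le> \<zeta> x / x - \<epsilon>/(2*\<alpha>)"
      unfolding Z_def by (rule core_up[OF b a1 \<epsilon> x1 z _ P]) simp
    hence "Z x - w x \<le> - k" by (simp add: w_def k_def)
    hence "(Z x - w x) / x \<le> - k / x" using x0 by (intro divide_right_mono) auto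
    thus ?thesis using w'eq[OF x0] by simp
  qed
  obtain st where st: "st \<ge> a0" "w st < c"
  proof -
    have "\<exists>x1\<ge>a0. w x1 < c"
    proof (rule escape_up[of a0 w w' c k])
      show "\<forall>x\<ge>a0. (w has_real_derivative w' x) (at x)" using dw a0 by simp
      show "\<forall>x\<ge>a0. c \<le> w x \<longrightarrow> w' x \<le> - k / x" using upneg by blast
    qed (use k a0 in simp_all)
    thus ?thesis using that by blast
  qed
  have up: "\<zeta> x \<le> (\<alpha>/\<bar>\<beta>\<bar> + \<epsilon>) * x" if "x \<ge> st" for x
  proof -
    have "w x < c"
    proof (rule trap_up[of a0 w w' c st x])
      show "\<forall>x\<ge>a0. (w has_real_derivative w' x) (at x)" using dw a0 by auto
      show "\<forall>x\<ge>a0. c \<le> w x \<longrightarrow> w' x < 0"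
      proof (intro allI impI)
        fix x assume "x \<ge> a0" "c \<le> w x"
        moreover have "- k / x < 0" using k \<open>x \<ge> a0\<close> a0 by simp
        ultimately show "w' x < 0" using upneg by fastforce
      qed
    qed (use st that in simp_all)
    thus ?thesis using that st a0 by (simp add: w_def c_def b_def divide_less_eq)
  qed
  obtain st2 where st2: "st2 > 0" "\<forall>x\<ge>st2. (\<alpha>/\<bar>\<beta>\<bar> - \<epsilon>) * x \<le> \<zeta> x"
  proof (cases "\<alpha>/b - \<epsilon> \<le> 0")
    case True
    have "\<forall>x\<ge>1. (\<alpha>/\<bar>\<beta>\<bar> - \<epsilon>) * x \<le> \<zeta> x"
    proof (intro allI impI)
      fix x :: real assume "x \<ge> 1"
      hence "(\<alpha>/\<bar>\<beta>\<bar> - \<epsilon>) * x \<le> 0" using True by (simp add: b_def mult_nonpos_nonneg)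
      also have "0 < \<zeta> x" using hpos \<open>x \<ge> 1\<close> by simp
      finally show "(\<alpha>/\<bar>\<beta>\<bar> - \<epsilon>) * x \<le> \<zeta> x" by simp
    qed
    thus ?thesis using that[of 1] by simp
  next
    case False
    define c' where "c' = \<alpha>/b - \<epsilon>"
    have c': "c' > 0" using False by (simp add: c'_def)
    define k' where "k' = b*\<epsilon>/\<alpha>^2"
    have k': "k' > 0" using b \<epsilon> a1 by (simp add: k'_def)
    have dnpos: "w' x \<ge> k' * w x / x" if x: "x \<ge> 1" "w x \<le> c'" for x
    proof -
      have x0: "x > 0" using x by simp
      have z: "\<zeta> x \<le> (\<alpha>/b-\<epsilon>)*x" using x x0 by (simp add: w_def c'_def pos_divide_le_eq)
      have "Z x \<ge> (1 + b*\<epsilon>/\<alpha>^2) * (\<zeta> x / x)"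
        unfolding Z_def by (rule core_down[OF b a1 \<epsilon> x0 _ z]) (use hpos x0 in auto)
      hence "Z x - w x \<ge> k' * w x" by (simp add: w_def k'_def algebra_simps)
      hence "(Z x - w x) / x \<ge> k' * w x / x" using x0 by (intro divide_right_mono) auto
      thus ?thesis using w'eq[OF x0] by simp
    qed
    obtain s2 where s2: "s2 \<ge> 1" "w s2 > c'"
    proof -
      have "\<exists>x1\<ge>1. w x1 > c'"
      proof (rule escape_down[of 1 w w' c' k'])
        show "\<forall>x\<ge>1. (w has_real_derivative w' x) (at x)" using dw by simp
        show "\<forall>x\<ge>1. w x > 0" using wpos by simp
        show "\<forall>x\<ge>1. w x \<le> c' \<longrightarrow> w' x \<ge> k' * w x / x" using dnpos by blast
      qed (use k' c' in simp_all)
      thus ?thesis using that by blast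
    qed
    have "\<forall>x\<ge>s2. (\<alpha>/\<bar>\<beta>\<bar> - \<epsilon>) * x \<le> \<zeta> x"
    proof (intro allI impI)
      fix x assume x: "x \<ge> s2"
      have "w x > c'"
      proof (rule trap_down[of 1 w w' c' s2 x])
        show "\<forall>x\<ge>1. (w has_real_derivative w' x) (at x)" using dw by auto
        show "\<forall>x\<ge>1. w x \<le> c' \<longrightarrow> 0 < w' x"
        proof (intro allI impI)
          fix x :: real assume "x \<ge> 1" "w x \<le> c'"
          moreover have "k' * w x / x > 0" using k' wpos[of x] \<open>x \<ge> 1\<close> by simp
          ultimately show "0 < w' x" using dnpos by fastforce
        qed
      qed (use s2 x in simp_all)
      thus "(\<alpha>/\<bar>\<beta>\<bar> - \<epsilon>) * x \<le> \<zeta> x" using x s2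
        by (simp add: w_def c'_def b_def less_divide_eq)
    qed
    thus ?thesis using that[of s2] s2 by simp
  qed
  show "\<exists>\<phi>\<epsilon>>0. \<forall>\<phi>\<ge>\<phi>\<epsilon>. (\<alpha> / \<bar>\<beta>\<bar> - \<epsilon>) * \<phi> \<le> \<zeta> \<phi> \<and> \<zeta> \<phi> \<le> (\<alpha> / \<bar>\<beta>\<bar> + \<epsilon>) * \<phi>"
  proof (intro exI[of _ "max st st2"] conjI allI impI)
    show "max st st2 > 0" using st2 by simp
    fix x assume "x \<ge> max st st2"
    thus "(\<alpha> / \<bar>\<beta>\<bar> - \<epsilon>) * x \<le> \<zeta> x" "\<zeta> x \<le> (\<alpha> / \<bar>\<beta>\<bar> + \<epsilon>) * x"
      using st2 up by auto
  qed
qed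

end
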